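(* Let $\mathcal{F}$ be a non-trivial minor-closed class of multigraphs and let $d_{\mathcal{F}}$ be a number such that every multigraph $H\in\mathcal{F}$ satisfies $|E(H)|\le \mu(H)\cdot d_{\mathcal{F}}\cdot |V(H)|$. Let $m$ be a positive integer and $G$ a multigraph with $\mu(G)\le m$ and $\delta(G)\ge 3m\cdot d_{\mathcal{F}}$. Then for every $X\subseteq V(G)$ with $G-X\in\mathcal{F}$, \[|E(G)|\;\le\;2\sum_{v\in X}\mathrm{edeg}_G(v)\;\le\;4|E(G)|.\]
   Context: Graphs are finite multigraphs without loops, edges counted with multiplicity. $\mu(H)$ is the maximum multiplicity of an edge of $H$. $\mathrm{edeg}_G(v)$ is the edge-degree of $v$, i.e., the number of edges of $G$ incident to $v$; $\delta(G)$ is the minimum edge-degree of $G$. A class is minor-closed if it is closed under taking minors, and non-trivial if it neither contains all graphs nor is empty. *)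

theory Defs
  imports Complex_Main "HOL-Library.Multiset"
begin

text \<open>A multigraph on vertex type 'v: a vertex set together with a multiset of
edges; each edge is a 2-element set of vertices (no loops), multiplicities
are counted by the multiset.\<close>

type_synonym 'v mgraph = "'v set \<times> 'v set multiset"

definition verts :: "'v mgraph \<Rightarrow> 'v set" where "verts G = fst G"
definition edges :: "'v mgraph \<Rightarrow> 'v set multiset" where "edges G = snd G"

definition mgraph :: "'v mgraph \<Rightarrow> bool" where
  "mgraph G \<longleftrightarrow> finite (verts G) \<and> (\<forall>e \<in># edges G. card e = 2 \<and> e \<subseteq> verts G)"

definition mu :: "'v mgraph \<Rightarrow> nat" where
  "mu G = Max (insert 0 ((\<lambda>e. count (edges G) e) ` set_mset (edges G)))"

definition edeg :: "'v mgraph \<Rightarrow> 'v \<Rightarrow> nat" where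
  "edeg G v = size (filter_mset (\<lambda>e. v \<in> e) (edges G))"

definition delete_vertices :: "'v mgraph \<Rightarrow> 'v set \<Rightarrow> 'v mgraph" where
  "delete_vertices G X = (verts G - X, filter_mset (\<lambda>e. e \<inter> X = {}) (edges G))"

definition delete_edge :: "'v mgraph \<Rightarrow> 'v set \<Rightarrow> 'v mgraph" where
  "delete_edge G e = (verts G, edges G - {#e#})"

text \<open>contraction of an edge {u,w}: w is merged into u; resulting loops are
discarded, parallel edges are kept with multiplicity\<close>
definition contract :: "'v mgraph \<Rightarrow> 'v \<Rightarrow> 'v \<Rightarrow> 'v mgraph" where
  "contract G u w = (verts G - {w},
     filter_mset (\<lambda>e. card e = 2)
       (image_mset (\<lambda>e. (\<lambda>x. if x = w then u else x) ` e) (edges G)))"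

definition relabel :: "('v \<Rightarrow> 'v) \<Rightarrow> 'v mgraph \<Rightarrow> 'v mgraph" where
  "relabel f G = (f ` verts G, image_mset (\<lambda>e. f ` e) (edges G))"

definition minor_closed :: "'v mgraph set \<Rightarrow> bool" where
  "minor_closed F \<longleftrightarrow> F \<subseteq> Collect mgraph
    \<and> (\<forall>G\<in>F. \<forall>f. inj_on f (verts G) \<longrightarrow> relabel f G \<in> F)
    \<and> (\<forall>G\<in>F. \<forall>v\<in>verts G. delete_vertices G {v} \<in> F)
    \<and> (\<forall>G\<in>F. \<forall>e\<in>#edges G. delete_edge G e \<in> F)
    \<and> (\<forall>G\<in>F. \<forall>u w. {u, w} \<in># edges G \<longrightarrow> contract G u w \<in> F)"

definition nontrivial_class :: "'v mgraph set \<Rightarrow> bool" where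
  "nontrivial_class F \<longleftrightarrow> F \<noteq> {} \<and> F \<noteq> Collect mgraph"

end

theory Submission
  imports Defs
begin

lemma sum_deg_swap:
  fixes M :: "'v set multiset"
  assumes "finite A"
  shows "(\<Sum>v\<in>A. size (filter_mset (\<lambda>e. v \<in> e) M)) = (\<Sum>e\<in>#M. card (e \<inter> A))"
proof (induction M)
  case empty
  then show ?case by simp
next
  case (add x M)
  have "(\<Sum>v\<in>A. size (filter_mset (\<lambda>e. v \<in> e) (add_mset x M)))
      = (\<Sum>v\<in>A. size (filter_mset (\<lambda>e. v \<in> e) M) + (if v \<in> x then 1 else 0))"
    by (intro sum.cong) auto
  also have "\<dots> = (\<Sum>v\<in>A. size (filter_mset (\<lambda>e. v \<in> e) M)) + (\<Sum>v\<in>A. (if v \<in> x then 1 else 0))"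
    by (simp add: sum.distrib)
  also have "(\<Sum>v\<in>A. (if v \<in> x then 1 else 0)) = card (x \<inter> A)"
    using assms by (simp add: sum.If_cases Int_commute)
  finally show ?case using add by simp
qed

lemma size_filter_sum:
  "size (filter_mset P M) = (\<Sum>e\<in>#M. if P e then 1 else (0::nat))"
  by (induction M) auto

theorem lemma7:
  fixes F :: "'v mgraph set" and dF :: real and m :: nat and G :: "'v mgraph" and X :: "'v set"
  assumes "minor_closed F" and "nontrivial_class F"
    and "\<forall>H\<in>F. real (size (edges H)) \<le> real (mu H) * dF * real (card (verts H))"
    and "m > 0"
    and "mgraph G"
    and "mu G \<le> m"
    and "\<forall>v\<in>verts G. real (edeg G v) \<ge> 3 * real m * dF"
    and "X \<subseteq> verts G"
    and "delete_vertices G X \<in> F"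
  shows "size (edges G) \<le> 2 * (\<Sum>v\<in>X. edeg G v)
       \<and> 2 * (\<Sum>v\<in>X. edeg G v) \<le> 4 * size (edges G)"
proof -
  define E where "E = edges G"
  define V where "V = verts G"
  define Y where "Y = V - X"
  define H where "H = delete_vertices G X"
  define EH where "EH = filter_mset (\<lambda>e. e \<inter> X = {}) E"
  have finV: "finite V" using assms(5) unfolding mgraph_def V_def by simp
  have finX: "finite X" using assms(8) finV V_def finite_subset by blast
  have finY: "finite Y" using finV Y_def by simp
  have Eprop: "\<And>e. e \<in># E \<Longrightarrow> card e = 2 \<and> e \<subseteq> V"
    using assms(5) unfolding mgraph_def E_def V_def by blast
  have vH: "verts H = Y" and eH: "edges H = EH"
    unfolding H_def delete_vertices_def verts_def edges_def Y_def V_def EH_def E_def by auto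
  have HF: "H \<in> F" using assms(9) H_def by simp
  have b1: "real (size EH) \<le> real (mu H) * dF * real (card Y)"
    using assms(3) HF vH eH by metis
  have muH: "mu H \<le> m"
  proof -
    have "\<forall>a \<in> insert 0 ((\<lambda>e. count (edges H) e) ` set_mset (edges H)). a \<le> m"
    proof
      fix a assume "a \<in> insert 0 ((\<lambda>e. count (edges H) e) ` set_mset (edges H))"
      then consider "a = 0" | e where "e \<in># EH" "a = count EH e" using eH by auto
      then show "a \<le> m"
      proof cases
        case 1 then show ?thesis by simp
      next
        case 2
        have "count EH e \<le> count E e" unfolding EH_def by simp
        also have "count E e \<le> mu G"
          unfolding mu_def E_def[symmetric]
          using 2 unfolding EH_def by (intro Max_ge) auto
        finally show ?thesis using 2 assms(6) by simp
      qed
    qed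
    then show ?thesis unfolding mu_def by (intro Max.boundedI) auto
  qed
  have sumY: "(\<Sum>v\<in>Y. edeg G v) = (\<Sum>e\<in>#E. card (e \<inter> Y))"
    unfolding edeg_def E_def using sum_deg_swap[OF finY] by simp
  have sumX: "(\<Sum>v\<in>X. edeg G v) = (\<Sum>e\<in>#E. card (e \<inter> X))"
    unfolding edeg_def E_def using sum_deg_swap[OF finX] by simp
  have key: "3 * size EH \<le> (\<Sum>e\<in>#E. card (e \<inter> Y))"
  proof (cases "dF > 0")
    case True
    have "real (size EH) \<le> real m * dF * real (card Y)"
    proof -
      have "real (mu H) * dF * real (card Y) \<le> real m * dF * real (card Y)"
        using muH True by (intro mult_right_mono) auto
      then show ?thesis using b1 by linarith
    qed
    moreover have "real (card Y) * (3 * real m * dF) \<le> (\<Sum>v\<in>Y. real (edeg G v))"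
      using sum_bounded_below[of Y "3 * real m * dF" "\<lambda>v. real (edeg G v)"] assms(7)
      unfolding Y_def V_def by auto
    ultimately have "real (3 * size EH) \<le> real (\<Sum>v\<in>Y. edeg G v)"
      by (simp add: algebra_simps)
    then show ?thesis using sumY by linarith
  next
    case False
    have "real (mu H) * dF * real (card Y) \<le> 0"
    proof -
      have "real (mu H) * dF \<le> 0" using False by (simp add: mult_nonneg_nonpos)
      then show ?thesis by (simp add: mult_nonpos_nonneg)
    qed
    then have "size EH = 0" using b1 by linarith
    then show ?thesis by simp
  qed
  have card_split: "\<And>e. e \<in># E \<Longrightarrow> card (e \<inter> X) + card (e \<inter> Y) = 2"
  proof -
    fix e assume "e \<in># E"
    then have "card e = 2" "e \<subseteq> V" using Eprop by auto
    moreover have "finite e" using \<open>e \<subseteq> V\<close> finV finite_subset by blast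
    ultimately show "card (e \<inter> X) + card (e \<inter> Y) = 2"
    proof -
      have u: "e = (e \<inter> X) \<union> (e \<inter> Y)" using \<open>e \<subseteq> V\<close> unfolding Y_def by blast
      have "card ((e \<inter> X) \<union> (e \<inter> Y)) = card (e \<inter> X) + card (e \<inter> Y)"
        using \<open>finite e\<close> unfolding Y_def by (intro card_Un_disjoint) auto
      then show ?thesis using u \<open>card e = 2\<close> by simp
    qed
  qed
  have sEH: "size EH = (\<Sum>e\<in>#E. if e \<inter> X = {} then 1 else 0)"
    unfolding EH_def by (rule size_filter_sum)
  define a where "a = (\<lambda>e. card (e \<inter> X))"
  have cz: "\<And>e. e \<in># E \<Longrightarrow> (e \<inter> X = {}) = (a e = 0)"
  proof -
    fix e assume "e \<in># E"
    then have "finite e" using Eprop finV finite_subset by blast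
    then show "(e \<inter> X = {}) = (a e = 0)" unfolding a_def by simp
  qed
  have k2: "(\<Sum>e\<in>#E. if a e = 0 then 1 else 0) \<le> (\<Sum>e\<in>#E. if a e = 1 then 1 else (0::nat))"
  proof -
    have "(\<Sum>e\<in>#E. card (e \<inter> Y)) = (\<Sum>e\<in>#E. 2 * (if a e = 0 then 1 else 0) + (if a e = 1 then 1 else (0::nat)))"
    proof (intro arg_cong[where f=sum_mset] image_mset_cong)
      fix e assume "e \<in># E"
      then show "card (e \<inter> Y) = 2 * (if a e = 0 then 1 else 0) + (if a e = 1 then 1 else (0::nat))"
        using card_split[of e] unfolding a_def by auto
    qed
    also have "\<dots> = 2 * (\<Sum>e\<in>#E. if a e = 0 then 1 else 0) + (\<Sum>e\<in>#E. if a e = 1 then 1 else (0::nat))"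
      by (simp add: sum_mset.distrib sum_mset_distrib_left)
    finally have eq: "(\<Sum>e\<in>#E. card (e \<inter> Y)) = \<dots>" .
    have "size EH = (\<Sum>e\<in>#E. if a e = 0 then 1 else 0)"
      unfolding sEH using cz by (intro arg_cong[where f=sum_mset] image_mset_cong) auto
    then show ?thesis using key eq by linarith
  qed
  have per: "(\<Sum>e\<in>#E. 1 + (if a e = 1 then 1 else (0::nat))) \<le> (\<Sum>e\<in>#E. 2 * a e + (if a e = 0 then 1 else 0))"
  proof (intro sum_mset_mono)
    fix e assume "e \<in># E"
    show "1 + (if a e = 1 then 1 else (0::nat)) \<le> 2 * a e + (if a e = 0 then 1 else 0)"
      by (cases "a e = 0"; cases "a e = 1") auto
  qed
  have sz: "size E = (\<Sum>e\<in>#E. (1::nat))" by (induction E) auto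
  have p1: "size E + (\<Sum>e\<in>#E. if a e = 1 then 1 else (0::nat)) \<le> 2 * (\<Sum>e\<in>#E. a e) + (\<Sum>e\<in>#E. if a e = 0 then 1 else 0)"
  proof -
    have l: "(\<Sum>e\<in>#E. 1 + (if a e = 1 then 1 else (0::nat))) = size E + (\<Sum>e\<in>#E. if a e = 1 then 1 else (0::nat))"
      unfolding sz by (rule sum_mset.distrib)
    have r: "(\<Sum>e\<in>#E. 2 * a e + (if a e = 0 then 1 else 0)) = 2 * (\<Sum>e\<in>#E. a e) + (\<Sum>e\<in>#E. if a e = 0 then 1 else (0::nat))"
      by (simp add: sum_mset.distrib sum_mset_distrib_left)
    show ?thesis using per l r by linarith
  qed
  have first: "size E \<le> 2 * (\<Sum>e\<in>#E. a e)" using p1 k2 by linarith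
  have "(\<Sum>e\<in>#E. a e) \<le> (\<Sum>e\<in>#E. (2::nat))"
  proof (intro sum_mset_mono)
    fix e assume "e \<in># E"
    then show "a e \<le> 2" using card_split[of e] unfolding a_def by linarith
  qed
  also have "\<dots> = 2 * size E" using sz by (simp add: sum_mset_distrib_left)
  finally have second: "(\<Sum>e\<in>#E. a e) \<le> 2 * size E" .
  show ?thesis using first second sumX unfolding a_def E_def by simp
qed

end
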